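(* Let $K$ be a field of characteristic zero. Suppose that for all $f,g\in K[X]$ and $x_0,y_0\in K$ the following holds: if $\{(f^n(x_0),g^n(y_0)):n\in\mathbb{N}\}$ has infinite intersection with the diagonal line $X=Y$ in $\mathbb{A}^2$, then the diagonal is periodic under the action of $(f,g)$. Then for all $f,g\in K[X]$, $x_0,y_0\in K$ and every line $L$ in $\mathbb{A}^2$ defined over $K$: if $\{(f^n(x_0),g^n(y_0)):n\in\mathbb{N}\}$ has infinite intersection with $L$, then $L$ is periodic under the action of $(f,g)$.
   Context: $f^n$ denotes the $n$-th iterate of $f$ under composition; $\mathbb{N}$ is the set of positive integers. The pair $(f,g)$ acts on $\mathbb{A}^2$ by $(x,y)\mapsto(f(x),g(y))$; a line $L$ is periodic under this action if there is $k\in\mathbb{N}$ such that $(x,y)\mapsto(f^k(x),g^k(y))$ maps $L$ into $L$. *)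

theory Defs
  imports "HOL-Computational_Algebra.Polynomial"
begin

definition orbit2 :: "'a::comm_semiring_0 poly \<Rightarrow> 'a poly \<Rightarrow> 'a \<Rightarrow> 'a \<Rightarrow> ('a \<times> 'a) set" where
  "orbit2 f g x0 y0 = {((poly f ^^ n) x0, (poly g ^^ n) y0) | n. n \<ge> 1}"

definition is_line :: "('a::field \<times> 'a) set \<Rightarrow> bool" where
  "is_line L \<longleftrightarrow> (\<exists>a b c. (a, b) \<noteq> (0, 0) \<and> L = {(x, y). a * x + b * y = c})"

definition diagonal :: "('a \<times> 'a) set" where
  "diagonal = {(x, y). x = y}"

definition periodic_line :: "'a::comm_semiring_0 poly \<Rightarrow> 'a poly \<Rightarrow> ('a \<times> 'a) set \<Rightarrow> bool" where
  "periodic_line f g L \<longleftrightarrow>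
     (\<exists>k::nat. k \<ge> 1 \<and> (\<forall>(x, y) \<in> L. ((poly f ^^ k) x, (poly g ^^ k) y) \<in> L))"

end

theory Submission
  imports Defs
begin

lemma two_elems:
  fixes N :: "nat set"
  assumes "infinite N"
  shows "\<exists>n1 n2. n1 < n2 \<and> n1 \<in> N \<and> n2 \<in> N"
proof -
  from assms obtain n1 where "n1 \<in> N" using infinite_imp_nonempty by blast
  moreover from assms obtain n2 where "n2 > n1" "n2 \<in> N"
    using infinite_nat_iff_unbounded by blast
  ultimately show ?thesis by blast
qed

lemma per_point:
  assumes "n1 < n2" "(h^^n1) x0 = p" "(h^^n2) x0 = p"
  shows "(h^^(n2-n1)) p = p"
proof -
  have "(h^^n2) x0 = (h^^((n2-n1)+n1)) x0" using assms(1) by simp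
  also have "\<dots> = (h^^(n2-n1)) ((h^^n1) x0)" by (simp add: funpow_add)
  finally have "(h^^n2) x0 = (h^^(n2-n1)) ((h^^n1) x0)" .
  thus ?thesis using assms by simp
qed

lemma vert_case:
  fixes f g :: "'a::field poly" and a c :: 'a
  assumes a: "a \<noteq> 0" and inf: "infinite (orbit2 f g x0 y0 \<inter> {(x,y). a * x = c})"
  shows "\<exists>k::nat. k \<ge> 1 \<and> (\<forall>x. a * x = c \<longrightarrow> a * (poly f ^^ k) x = c)"
proof -
  let ?N = "{n. (n::nat) \<ge> 1 \<and> a * (poly f ^^ n) x0 = c}"
  have sub: "orbit2 f g x0 y0 \<inter> {(x,y). a * x = c} \<subseteq>
        (\<lambda>n. ((poly f ^^ n) x0, (poly g ^^ n) y0)) ` ?N"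
    unfolding orbit2_def by auto
  have "infinite ?N"
  proof
    assume "finite ?N"
    hence "finite ((\<lambda>n. ((poly f ^^ n) x0, (poly g ^^ n) y0)) ` ?N)" by (rule finite_imageI)
    hence "finite (orbit2 f g x0 y0 \<inter> {(x,y). a * x = c})" using sub by (rule finite_subset[rotated])
    thus False using inf by contradiction
  qed
  then obtain n1 n2 where n: "n1 < n2" "n1 \<in> ?N" "n2 \<in> ?N" using two_elems by blast
  define p where "p = (poly f ^^ n1) x0"
  have "a * (poly f ^^ n2) x0 = a * p" using n unfolding p_def by simp
  hence "(poly f ^^ n2) x0 = p" using a by simp
  hence per: "(poly f ^^ (n2-n1)) p = p" by (rule per_point[OF n(1) p_def[symmetric]])
  show ?thesis
  proof (intro exI[of _ "n2-n1"] conjI allI impI)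
    show "1 \<le> n2 - n1" using n by simp
    fix x assume "a * x = c"
    moreover have "a * p = c" using n(2) unfolding p_def mem_Collect_eq by (rule conjunct2)
    ultimately have "a * x = a * p" by simp
    hence "x = p" using a by simp
    thus "a * (poly f ^^ (n2 - n1)) x = c" using per \<open>a * x = c\<close> by simp
  qed
qed

lemma iter_conj:
  assumes "\<And>z. phi (psi z) = z" "\<And>z. psi (phi z) = z"
  shows "((\<lambda>y. psi (h (phi y))) ^^ n) y = psi ((h ^^ n) (phi y))"
  by (induction n) (auto simp: assms)

theorem lemma5p1:
  assumes diag: "\<And>(f :: 'a::field_char_0 poly) g x0 y0.
      infinite (orbit2 f g x0 y0 \<inter> diagonal) \<Longrightarrow> periodic_line f g diagonal"
  shows "\<forall>(f :: 'a poly) g x0 y0 L. is_line L \<longrightarrow> infinite (orbit2 f g x0 y0 \<inter> L)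
            \<longrightarrow> periodic_line f g L"
proof (intro allI impI)
  fix f g :: "'a poly" and x0 y0 L
  assume "is_line L" and inf: "infinite (orbit2 f g x0 y0 \<inter> L)"
  then obtain a b c where ab: "(a, b) \<noteq> (0, 0)" and L: "L = {(x, y). a * x + b * y = c}"
    unfolding is_line_def by blast
  consider "b = 0" | "a = 0" | "a \<noteq> 0" "b \<noteq> 0" by blast
  then show "periodic_line f g L"
  proof cases
    case 1
    hence a: "a \<noteq> 0" using ab by simp
    have "L = {(x,y). a * x = c}" using L 1 by simp
    with vert_case[OF a] inf obtain k where "k \<ge> 1" "\<forall>x. a * x = c \<longrightarrow> a * (poly f ^^ k) x = c"
      by blast
    thus ?thesis unfolding periodic_line_def using L 1 by auto
  next
    case 2
    hence b: "b \<noteq> 0" using ab by simp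
    have sw: "prod.swap ` (orbit2 f g x0 y0 \<inter> L) \<subseteq> orbit2 g f y0 x0 \<inter> {(x,y). b * x = c}"
      using 2 unfolding L orbit2_def by auto
    have "infinite (orbit2 g f y0 x0 \<inter> {(x,y). b * x = c})"
    proof
      assume fin: "finite (orbit2 g f y0 x0 \<inter> {(x,y). b * x = c})"
      have "inj_on prod.swap (orbit2 f g x0 y0 \<inter> L)" by (auto simp: inj_on_def)
      moreover have "finite (prod.swap ` (orbit2 f g x0 y0 \<inter> L))"
        using sw fin by (rule finite_subset)
      ultimately show False using inf finite_imageD by blast
    qed
    with vert_case[OF b] obtain k where "k \<ge> 1" "\<forall>x. b * x = c \<longrightarrow> b * (poly g ^^ k) x = c"
      by blast
    thus ?thesis unfolding periodic_line_def using L 2 by auto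
  next
    case 3
    define phi where "phi = (\<lambda>x::'a. (c - a * x) / b)"
    define psi where "psi = (\<lambda>y::'a. (c - b * y) / a)"
    have pp: "phi (psi z) = z" for z using 3 unfolding phi_def psi_def by (simp add: field_simps)
    have pp2: "psi (phi z) = z" for z using 3 unfolding phi_def psi_def by (simp add: field_simps)
    have psi_eq: "a * psi z + b * z = c" for z using 3 unfolding psi_def by (simp add: field_simps)
    have inL: "(x,y) \<in> L \<longleftrightarrow> x = psi y" for x y
      using 3 unfolding L psi_def by (auto simp: field_simps)
    define g' where "g' = pcompose [:c/a, -b/a:] (pcompose g [:c/b, -a/b:])"
    have pg': "poly g' = (\<lambda>y. psi (poly g (phi y)))"
      unfolding g'_def phi_def psi_def using 3
      by (auto simp: poly_pcompose field_simps fun_eq_iff)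
    have it: "(poly g' ^^ n) y = psi ((poly g ^^ n) (phi y))" for n y
      unfolding pg' by (rule iter_conj[OF pp pp2])
    let ?m = "\<lambda>(x::'a, y::'a). (x, psi y)"
    have inj: "inj_on ?m (orbit2 f g x0 y0 \<inter> L)"
      using 3 unfolding inj_on_def psi_def by auto
    have sub: "?m ` (orbit2 f g x0 y0 \<inter> L) \<subseteq> orbit2 f g' x0 (psi y0) \<inter> diagonal"
    proof
      fix q assume "q \<in> ?m ` (orbit2 f g x0 y0 \<inter> L)"
      then obtain n where n: "n \<ge> 1" "((poly f ^^ n) x0, (poly g ^^ n) y0) \<in> L"
        and q: "q = ((poly f ^^ n) x0, psi ((poly g ^^ n) y0))"
        unfolding orbit2_def by auto
      have "(poly g' ^^ n) (psi y0) = psi ((poly g ^^ n) y0)" using it pp by simp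
      moreover have "(poly f ^^ n) x0 = psi ((poly g ^^ n) y0)" using n(2) inL by blast
      ultimately show "q \<in> orbit2 f g' x0 (psi y0) \<inter> diagonal"
        using n(1) q unfolding orbit2_def diagonal_def by force
    qed
    have "infinite (orbit2 f g' x0 (psi y0) \<inter> diagonal)"
      using inf inj sub finite_subset finite_imageD by blast
    from diag[OF this] obtain k where k: "k \<ge> 1"
      "\<forall>x. (poly f ^^ k) x = (poly g' ^^ k) x"
      unfolding periodic_line_def diagonal_def by auto
    show ?thesis unfolding periodic_line_def
    proof (intro exI[of _ k] conjI ballI)
      show "1 \<le> k" by fact
      fix q assume "q \<in> L"
      then obtain x y where q: "q = (x,y)" "x = psi y" using inL by (cases q) auto
      have "(poly f ^^ k) x = psi ((poly g ^^ k) y)" using k(2) it q pp by simp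
      thus "case q of (x, y) \<Rightarrow> ((poly f ^^ k) x, (poly g ^^ k) y) \<in> L"
        using q inL by simp
    qed
  qed
qed

end
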